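(* Let $B \subset \mathbb{Z}$ be a Bohr-zero non-periodic set. Then the set $D := \{xy - z^2 \,:\, x,y,z \in B\}$ satisfies $D = \mathbb{Z}$.
   Context: $\mathbb{T}^n=\mathbb{R}^n/\mathbb{Z}^n$. A set $B\subset \mathbb{Z}$ is a non-periodic Bohr set if there exist $n\ge 1$, a homomorphism $\tau:\mathbb{Z}\to\mathbb{T}^n$ with $\overline{\tau(\mathbb{Z})}=\mathbb{T}^n$, and an open set $U\subset\mathbb{T}^n$ with $B=\tau^{-1}(U)$; it is Bohr-zero if moreover $U$ contains the zero element of $\mathbb{T}^n$. *)

theory Defs
  imports Complex_Main
begin

text \<open>The torus T^n = R^n/Z^n is modelled through its universal cover. Points of R^n are
functions nat => real of which only the coordinates i < n matter. An open set U of T^n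
is represented by its preimage V under the quotient map R^n -> T^n: an open set of R^n
(for the coordinates i < n) which is invariant under translation by integer vectors.\<close>

definition torus_open :: "nat \<Rightarrow> (nat \<Rightarrow> real) set \<Rightarrow> bool" where
  "torus_open n V \<longleftrightarrow>
     (\<forall>x\<in>V. \<exists>e>0. \<forall>y. (\<forall>i<n. \<bar>y i - x i\<bar> < e) \<longrightarrow> y \<in> V) \<and>
     (\<forall>x m. (\<forall>i. m i \<in> \<int>) \<longrightarrow> (x \<in> V \<longleftrightarrow> (\<lambda>i. x i + m i) \<in> V))"

text \<open>Every homomorphism tau : Z -> T^n has the form tau k = k * alpha mod Z^n.
Its image is dense in T^n iff the set of points k*alpha + m (k in Z, m in Z^n)
is dense in R^n.\<close>

definition dense_orbit :: "nat \<Rightarrow> (nat \<Rightarrow> real) \<Rightarrow> bool" where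
  "dense_orbit n \<alpha> \<longleftrightarrow>
     (\<forall>x e. e > 0 \<longrightarrow>
        (\<exists>k::int. \<exists>m. (\<forall>i. m i \<in> \<int>) \<and>
            (\<forall>i<n. \<bar>of_int k * \<alpha> i + m i - x i\<bar> < e)))"

definition nonperiodic_bohr :: "int set \<Rightarrow> bool" where
  "nonperiodic_bohr B \<longleftrightarrow>
     (\<exists>n\<ge>1. \<exists>\<alpha> V. dense_orbit n \<alpha> \<and> torus_open n V \<and>
        B = {k. (\<lambda>i. of_int k * \<alpha> i) \<in> V})"

definition bohr_zero_nonperiodic :: "int set \<Rightarrow> bool" where
  "bohr_zero_nonperiodic B \<longleftrightarrow>
     (\<exists>n\<ge>1. \<exists>\<alpha> V. dense_orbit n \<alpha> \<and> torus_open n V \<and> (\<lambda>i. 0) \<in> V \<and>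
        B = {k. (\<lambda>i. of_int k * \<alpha> i) \<in> V})"

end

theory Submission
  imports Defs "HOL-Library.FuncSet"
begin


definition near :: "nat \<Rightarrow> (nat \<Rightarrow> real) \<Rightarrow> real \<Rightarrow> bool" where
  "near n v r \<longleftrightarrow> (\<exists>m::nat\<Rightarrow>int. \<forall>i<n. \<bar>v i - of_int (m i)\<bar> \<le> r)"

lemma near_add:
  assumes "near n v r" "near n w s"
  shows "near n (\<lambda>i. v i + w i) (r + s)"
proof -
  obtain m where m: "\<forall>i<n. \<bar>v i - of_int (m i)\<bar> \<le> r" using assms(1) unfolding near_def by blast
  obtain m' where m': "\<forall>i<n. \<bar>w i - of_int (m' i)\<bar> \<le> s" using assms(2) unfolding near_def by blast
  have "\<forall>i<n. \<bar>v i + w i - of_int (m i + m' i)\<bar> \<le> r + s"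
  proof (intro allI impI)
    fix i assume "i < n"
    then have "\<bar>v i - of_int (m i)\<bar> \<le> r" "\<bar>w i - of_int (m' i)\<bar> \<le> s" using m m' by auto
    then show "\<bar>v i + w i - of_int (m i + m' i)\<bar> \<le> r + s" by simp
  qed
  then show ?thesis unfolding near_def by (rule exI[where x="\<lambda>i. m i + m' i"])
qed

lemma near_scale:
  assumes "near n v r"
  shows "near n (\<lambda>i. of_int c * v i) (\<bar>of_int c\<bar> * r)"
proof -
  obtain m where m: "\<forall>i<n. \<bar>v i - of_int (m i)\<bar> \<le> r" using assms(1) unfolding near_def by blast
  have "\<forall>i<n. \<bar>of_int c * v i - of_int (c * m i)\<bar> \<le> \<bar>of_int c\<bar> * r"
  proof (intro allI impI)
    fix i assume "i < n"
    then have "\<bar>v i - of_int (m i)\<bar> \<le> r" using m by auto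
    then have "\<bar>of_int c\<bar> * \<bar>v i - of_int (m i)\<bar> \<le> \<bar>of_int c\<bar> * r"
      by (simp add: mult_left_mono)
    moreover have "of_int c * v i - of_int (c * m i) = of_int c * (v i - of_int (m i))"
      by (simp add: algebra_simps)
    ultimately show "\<bar>of_int c * v i - of_int (c * m i)\<bar> \<le> \<bar>of_int c\<bar> * r"
      by (simp add: abs_mult)
  qed
  then show ?thesis unfolding near_def by (rule exI[where x="\<lambda>i. c * m i"])
qed

lemma near_mono: "near n v r \<Longrightarrow> r \<le> s \<Longrightarrow> near n v s"
  unfolding near_def by (meson order_trans)

lemma near_eq: "near n v r \<Longrightarrow> (\<And>i. i < n \<Longrightarrow> w i = v i) \<Longrightarrow> near n w r"
  unfolding near_def by auto

lemma near_small: "(\<And>i. i < n \<Longrightarrow> \<bar>v i\<bar> \<le> r) \<Longrightarrow> near n v r"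
  unfolding near_def by (rule exI[of _ "\<lambda>_. 0"]) simp

lemma dense_near:
  assumes "dense_orbit n \<alpha>" "e > 0"
  shows "\<exists>k::int. near n (\<lambda>i. of_int k * \<alpha> i - x i) e"
proof -
  from assms obtain k m where m: "\<forall>i. m i \<in> \<int>"
    and h: "\<forall>i<n. \<bar>of_int k * \<alpha> i + m i - x i\<bar> < e"
    unfolding dense_orbit_def by blast
  have "\<forall>i<n. \<bar>of_int k * \<alpha> i - x i - of_int (- \<lfloor>m i\<rfloor>)\<bar> \<le> e"
  proof (intro allI impI)
    fix i assume "i < n"
    from m have "of_int \<lfloor>m i\<rfloor> = m i" by (metis Ints_cases floor_of_int)
    with h \<open>i<n\<close> show "\<bar>of_int k * \<alpha> i - x i - of_int (- \<lfloor>m i\<rfloor>)\<bar> \<le> e"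
      by force
  qed
  then have "near n (\<lambda>i. of_int k * \<alpha> i - x i) e"
    unfolding near_def by (rule exI[where x="\<lambda>i. - \<lfloor>m i\<rfloor>"])
  then show ?thesis by (rule exI[where x=k])
qed

lemma small_nonzero:
  assumes "n \<ge> 1" "dense_orbit n \<alpha>" "0 < d" "d \<le> 1"
  shows "\<exists>k::int. k > 0 \<and> near n (\<lambda>i. of_int k * \<alpha> i) d"
proof -
  have "\<exists>k m. (\<forall>i. m i \<in> \<int>) \<and> (\<forall>i<n. \<bar>of_int k * \<alpha> i + m i - d/2\<bar> < d/2)"
    using assms(2) unfolding dense_orbit_def
    apply (erule_tac allE[of _ "\<lambda>i. d/2"])
    apply (erule_tac allE[of _ "d/2"])
    using assms(3) by auto
  then obtain k m where m: "\<forall>i. m i \<in> \<int>"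
    and h: "\<forall>i<n. \<bar>of_int k * \<alpha> i + m i - d/2\<bar> < d/2" by blast
  have k0: "k \<noteq> 0"
  proof
    assume "k = 0"
    with h assms(1) have "\<bar>m 0 - d/2\<bar> < d/2" by auto
    then have "0 < m 0" "m 0 < 1" using assms(4) unfolding abs_less_iff by linarith+
    moreover obtain z where "m 0 = of_int z" using m by (metis Ints_cases)
    ultimately show False by auto
  qed
  have nr: "near n (\<lambda>i. of_int k * \<alpha> i) d"
  proof -
    have "\<forall>i<n. \<bar>of_int k * \<alpha> i - of_int (- \<lfloor>m i\<rfloor>)\<bar> \<le> d"
    proof (intro allI impI)
      fix i assume "i < n"
      from m have eq: "of_int \<lfloor>m i\<rfloor> = m i" by (metis Ints_cases floor_of_int)
      have "\<bar>of_int k * \<alpha> i + m i - d/2\<bar> < d/2" using h \<open>i<n\<close> by auto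
      then have "0 < of_int k * \<alpha> i + m i" "of_int k * \<alpha> i + m i < d"
        unfolding abs_less_iff by linarith+
      moreover have e2: "of_int k * \<alpha> i - of_int (- \<lfloor>m i\<rfloor>) = of_int k * \<alpha> i + m i"
        using eq by simp
      ultimately show "\<bar>of_int k * \<alpha> i - of_int (- \<lfloor>m i\<rfloor>)\<bar> \<le> d"
        unfolding e2 by (simp add: abs_le_iff)
    qed
    then show ?thesis unfolding near_def by (rule exI[where x="\<lambda>i. - \<lfloor>m i\<rfloor>"])
  qed
  show ?thesis
  proof (cases "k > 0")
    case True then show ?thesis using nr True by (intro exI[where x=k] conjI)
  next
    case False
    have "near n (\<lambda>i. of_int (-1) * (of_int k * \<alpha> i)) (\<bar>of_int (-1)\<bar> * d)"
      by (rule near_scale[OF nr])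
    then have "near n (\<lambda>i. of_int (-k) * \<alpha> i) d" by simp
    moreover have "-k > 0" using False k0 by simp
    ultimately show ?thesis by (intro exI[where x="-k"] conjI)
  qed
qed


lemma floor_frac_close:
  fixes a b :: real and K :: nat
  assumes "K \<ge> 1" "\<lfloor>of_nat K * frac a\<rfloor> = \<lfloor>of_nat K * frac b\<rfloor>"
  shows "\<bar>a - b - of_int (\<lfloor>a\<rfloor> - \<lfloor>b\<rfloor>)\<bar> \<le> 1 / of_nat K"
proof -
  have "\<bar>of_nat K * frac a - of_nat K * frac b\<bar> < 1"
    using assms(2) by linarith
  then have "of_nat K * \<bar>frac a - frac b\<bar> < 1"
    by (simp add: abs_mult right_diff_distrib[symmetric])
  then have "\<bar>frac a - frac b\<bar> < 1 / of_nat K"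
    using assms(1) by (simp add: field_simps)
  moreover have "a - b - of_int (\<lfloor>a\<rfloor> - \<lfloor>b\<rfloor>) = frac a - frac b"
    by (simp add: frac_def)
  ultimately show ?thesis by simp
qed

lemma aux1:
  fixes A P Q c :: real
  assumes "0 < P" "1 \<le> Q" "0 \<le> A" "A \<le> Q" "0 < c"
  shows "A * (c / (P * Q)) \<le> c / P"
proof -
  have "A * (c / (P * Q)) = (c / P) * (A / Q)" by simp
  also have "\<dots> \<le> (c / P) * 1"
    using assms by (intro mult_left_mono) auto
  finally show ?thesis by simp
qed

lemma aux2:
  fixes x y c :: real
  assumes "y > 0"
  shows "c * (1/x - 1/y) + c / (2*y) = c * (1/x - 1/(2*y))"
  using assms by (simp add: field_simps)

lemma aux3:
  fixes x X Y Z :: int and a :: real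
  assumes "x = X - Y - 2 * Z"
  shows "of_int x * a = (of_int X * a - of_int Y * a) + of_int (-2) * (of_int Z * a)"
proof -
  have E: "(of_int x::real) = of_int X - of_int Y - 2 * of_int Z" using assms by simp
  show ?thesis by (simp only: E) (simp add: algebra_simps)
qed

lemma aux4:
  fixes a b :: int
  shows "(a - b)^2 = a^2 - b^2 - 2 * (b * (a - b))"
  by (simp add: power2_eq_square algebra_simps)

lemma recur:
  assumes n1: "n \<ge> 1" and dn: "dense_orbit n \<alpha>" and dpos: "\<delta> > 0"
  shows "\<exists>q::int. q \<noteq> 0 \<and> near n (\<lambda>i. of_int q * \<alpha> i) \<delta>
            \<and> near n (\<lambda>i. of_int (q^2) * \<alpha> i) \<delta>"
proof -
  define c where "c = min (\<delta>/4) (1/4)"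
  have c0: "c > 0" and c1: "c \<le> 1/4" and cd: "c \<le> \<delta>/4" using dpos by (auto simp: c_def)
  have "\<forall>i (s::int). \<exists>k::int. k > 0 \<and>
          near n (\<lambda>j. of_int k * \<alpha> j) (c / (2^Suc i * (1 + \<bar>of_int s\<bar>)))"
  proof (intro allI)
    fix i and s :: int
    have p: "c / (2^Suc i * (1 + \<bar>of_int s\<bar>)) > 0" using c0 by (simp add: add_pos_nonneg)
    have h1: "1 \<le> (2::real)^Suc i" by (rule one_le_power) simp
    have h2: "1 \<le> 1 + \<bar>of_int s::real\<bar>" by simp
    have "1 * 1 \<le> (2::real)^Suc i * (1 + \<bar>of_int s\<bar>)"
      by (rule mult_mono[OF h1 h2]) auto
    then have "1 \<le> (2::real)^Suc i * (1 + \<bar>of_int s\<bar>)" by simp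
    then have "c / (2^Suc i * (1 + \<bar>of_int s\<bar>)) \<le> c / 1"
      using c0 by (intro divide_left_mono) auto
    then have "c / (2^Suc i * (1 + \<bar>of_int s\<bar>)) \<le> 1" using c1 div_by_1[of c] by linarith
    then show "\<exists>k::int. k > 0 \<and> near n (\<lambda>j. of_int k * \<alpha> j) (c / (2^Suc i * (1 + \<bar>of_int s\<bar>)))"
      by (rule small_nonzero[OF n1 dn p])
  qed
  note ex = this
  define f :: "nat \<Rightarrow> int \<Rightarrow> int" where
    "f i s = (SOME k. k > 0 \<and> near n (\<lambda>j. of_int k * \<alpha> j) (c / (2^Suc i * (1 + \<bar>of_int s\<bar>))))" for i s
  have f: "f i s > 0 \<and> near n (\<lambda>j. of_int (f i s) * \<alpha> j) (c / (2^Suc i * (1 + \<bar>of_int s\<bar>)))" for i s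
    unfolding f_def by (rule someI_ex) (use ex in blast)
  define S where "S = rec_nat (0::int) (\<lambda>i r. r + f i r)"
  have S0: "S 0 = 0" and SS: "\<And>i. S (Suc i) = S i + f i (S i)" by (simp_all add: S_def)
  have Snn: "S i \<ge> 0" for i
  proof (induction i)
    case 0 then show ?case by (simp add: S0)
  next
    case (Suc i) then show ?case using f[of i "S i"] SS[of i] by linarith
  qed
  have Smono: "j \<le> l \<Longrightarrow> S j \<le> S l" for j l
  proof (induction l rule: dec_induct)
    case (step m) then show ?case using f[of m "S m"] SS[of m] by linarith
  qed simp
  have Sstrict: "j < l \<Longrightarrow> S j < S l" for j l
  proof -
    assume "j < l"
    then have "S (Suc j) \<le> S l" using Smono by simp
    moreover have "S j < S (Suc j)" using f[of j "S j"] SS[of j] by linarith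
    ultimately show ?thesis by linarith
  qed
  define K :: nat where "K = nat \<lceil>1/c\<rceil>"
  have ic: "1/c \<ge> 1" using c0 c1 by (simp add: field_simps)
  have ceil1: "of_int \<lceil>1/c\<rceil> \<ge> 1/c" by (rule le_of_int_ceiling)
  have cpos: "\<lceil>1/c\<rceil> \<ge> 1" using ic ceil1 by linarith
  have Kr: "(of_nat K::real) = of_int \<lceil>1/c\<rceil>" unfolding K_def using cpos by simp
  have K1: "K \<ge> 1" using cpos unfolding K_def by linarith
  have Kc: "1 / of_nat K \<le> c"
  proof -
    have "of_nat K \<ge> 1/c" using Kr ceil1 by linarith
    moreover have "(0::real) < of_nat K" using K1 by simp
    ultimately show ?thesis using c0 by (simp add: field_simps)
  qed
  define g where "g j = restrict (\<lambda>i. \<lfloor>of_nat K * frac (of_int (S j ^ 2) * \<alpha> i)\<rfloor>) {..<n}" for j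
  have rng: "\<lfloor>of_nat K * frac x\<rfloor> \<in> {0..int K}" for x :: real
  proof -
    have a: "0 \<le> of_nat K * frac x" by (simp add: frac_ge_0)
    have "frac x \<le> 1" using frac_lt_1[of x] by linarith
    then have b: "of_nat K * frac x \<le> of_nat K * 1"
      by (intro mult_left_mono) auto
    have "0 \<le> \<lfloor>of_nat K * frac x\<rfloor>" using a by simp
    moreover have "\<lfloor>of_nat K * frac x\<rfloor> \<le> int K" using b by (simp add: floor_le_iff)
    ultimately show ?thesis by simp
  qed
  have "g j \<in> PiE {..<n} (\<lambda>_. {0..int K})" for j
    unfolding g_def using rng by (simp add: PiE_iff)
  then have "range g \<subseteq> PiE {..<n} (\<lambda>_. {0..int K})" by auto
  then have fin: "finite (range g)" by (rule finite_subset) (simp add: finite_PiE)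
  have "\<not> inj g"
  proof
    assume "inj g"
    then have "finite (UNIV::nat set)" using fin finite_imageD by blast
    then show False by simp
  qed
  then obtain j0 l0 where jl0: "j0 \<noteq> l0" "g j0 = g l0" unfolding inj_def by blast
  obtain j l where jl: "j < l" and gjl: "g j = g l"
  proof (cases "j0 < l0")
    case True then show ?thesis using that jl0 by blast
  next
    case False then have "l0 < j0" using jl0(1) by simp
    then show ?thesis using that jl0(2) by metis
  qed
  have diff: "near n (\<lambda>i. of_int (S l ^ 2) * \<alpha> i - of_int (S j ^ 2) * \<alpha> i) c"
  proof -
    have "\<forall>i<n. \<bar>of_int (S l ^ 2) * \<alpha> i - of_int (S j ^ 2) * \<alpha> i
               - of_int (\<lfloor>of_int (S l ^ 2) * \<alpha> i\<rfloor> - \<lfloor>of_int (S j ^ 2) * \<alpha> i\<rfloor>)\<bar> \<le> c"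
    proof (intro allI impI)
      fix i assume "i < n"
      then have "\<lfloor>of_nat K * frac (of_int (S l ^ 2) * \<alpha> i)\<rfloor> = \<lfloor>of_nat K * frac (of_int (S j ^ 2) * \<alpha> i)\<rfloor>"
        using fun_cong[OF gjl, of i] unfolding g_def by simp
      from floor_frac_close[OF K1 this] Kc show "\<bar>of_int (S l ^ 2) * \<alpha> i - of_int (S j ^ 2) * \<alpha> i
               - of_int (\<lfloor>of_int (S l ^ 2) * \<alpha> i\<rfloor> - \<lfloor>of_int (S j ^ 2) * \<alpha> i\<rfloor>)\<bar> \<le> c"
        by linarith
    qed
    then show ?thesis unfolding near_def
      by (rule exI[where x="\<lambda>i. \<lfloor>of_int (S l ^ 2) * \<alpha> i\<rfloor> - \<lfloor>of_int (S j ^ 2) * \<alpha> i\<rfloor>"])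
  qed
  have ind: "near n (\<lambda>i. of_int (S m - S j) * \<alpha> i) (c * (1/2^j - 1/2^m)) \<and>
             near n (\<lambda>i. of_int (S j * (S m - S j)) * \<alpha> i) (c * (1/2^j - 1/2^m))"
    if "j \<le> m" for m
    using that
  proof (induction m rule: dec_induct)
    case base
    show ?case by (auto intro!: near_small)
  next
    case (step m)
    let ?b = "c / (2^Suc m * (1 + \<bar>of_int (S m)\<bar>))"
    have fm: "near n (\<lambda>i. of_int (f m (S m)) * \<alpha> i) ?b" using f by blast
    have pw: "(0::real) < 2^Suc m" by simp
    have b1: "?b \<le> c / 2^Suc m"
    proof -
      have "(2::real)^Suc m * 1 \<le> 2^Suc m * (1 + \<bar>of_int (S m)\<bar>)"
        by (intro mult_left_mono) auto
      then show ?thesis using c0 pw by (intro divide_left_mono) auto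
    qed
    have Sj: "\<bar>of_int (S j)\<bar> \<le> \<bar>of_int (S m)::real\<bar>" using Smono[OF step(1)] Snn[of j] by simp
    have b2: "\<bar>of_int (S j)\<bar> * ?b \<le> c / 2^Suc m"
      by (rule aux1) (use pw Sj c0 in auto)
    have eqb: "c * (1/2^j - 1/2^m) + c / 2^Suc m = c * (1/2^j - 1/2^Suc m)"
      using aux2[of "2^m" c "2^j"] by simp
    have A: "near n (\<lambda>i. of_int (S m - S j) * \<alpha> i + of_int (f m (S m)) * \<alpha> i)
               (c * (1/2^j - 1/2^m) + c / 2^Suc m)"
      using near_add[OF step(3)[THEN conjunct1] near_mono[OF fm b1]] .
    have B0: "near n (\<lambda>i. of_int (S j) * (of_int (f m (S m)) * \<alpha> i)) (c / 2^Suc m)"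
      using near_mono[OF near_scale[OF fm, of "S j"] b2] .
    have B: "near n (\<lambda>i. of_int (S j * (S m - S j)) * \<alpha> i + of_int (S j) * (of_int (f m (S m)) * \<alpha> i))
               (c * (1/2^j - 1/2^m) + c / 2^Suc m)"
      using near_add[OF step(3)[THEN conjunct2] B0] .
    show ?case
    proof
      show "near n (\<lambda>i. of_int (S (Suc m) - S j) * \<alpha> i) (c * (1/2^j - 1/2^Suc m))"
        using A unfolding eqb by (rule near_eq) (simp add: SS algebra_simps)
      show "near n (\<lambda>i. of_int (S j * (S (Suc m) - S j)) * \<alpha> i) (c * (1/2^j - 1/2^Suc m))"
        using B unfolding eqb by (rule near_eq) (simp add: SS algebra_simps)
    qed
  qed
  have cb: "c * (1/2^j - 1/2^l) \<le> c"
  proof -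
    have "(1::real)/2^j \<le> 1" by simp
    moreover have "(0::real) \<le> 1/2^l" by simp
    ultimately have "(1::real)/2^j - 1/2^l \<le> 1" by linarith
    then show ?thesis using c0 by (simp add: mult_left_le)
  qed
  define q where "q = S l - S j"
  have q0: "q \<noteq> 0" using Sstrict[OF jl] by (simp add: q_def)
  have indl: "near n (\<lambda>i. of_int (S l - S j) * \<alpha> i) (c * (1/2^j - 1/2^l)) \<and>
             near n (\<lambda>i. of_int (S j * (S l - S j)) * \<alpha> i) (c * (1/2^j - 1/2^l))"
    by (rule ind) (rule less_imp_le[OF jl])
  have I1: "near n (\<lambda>i. of_int q * \<alpha> i) c"
    unfolding q_def by (rule near_mono[OF indl[THEN conjunct1] cb])
  have I2: "near n (\<lambda>i. of_int (S j * q) * \<alpha> i) c"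
    unfolding q_def by (rule near_mono[OF indl[THEN conjunct2] cb])
  have qq: "q^2 = S l ^ 2 - S j ^ 2 - 2 * (S j * q)" unfolding q_def by (rule aux4)
  have eqI: "of_int (q^2) * \<alpha> i = (of_int (S l ^ 2) * \<alpha> i - of_int (S j ^ 2) * \<alpha> i)
                  + of_int (-2) * (of_int (S j * q) * \<alpha> i)" for i
    by (rule aux3[OF qq])
  have sc: "near n (\<lambda>i. of_int (-2) * (of_int (S j * q) * \<alpha> i)) (\<bar>of_int (-2)\<bar> * c)"
    by (rule near_scale[OF I2])
  have sm: "near n (\<lambda>i. (of_int (S l ^ 2) * \<alpha> i - of_int (S j ^ 2) * \<alpha> i)
                  + of_int (-2) * (of_int (S j * q) * \<alpha> i)) (c + \<bar>of_int (-2)\<bar> * c)"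
    using near_add[OF diff sc] by simp
  have b3: "c + \<bar>of_int (-2)\<bar> * c \<le> 3 * c" by simp
  have sm3: "near n (\<lambda>i. (of_int (S l ^ 2) * \<alpha> i - of_int (S j ^ 2) * \<alpha> i)
                  + of_int (-2) * (of_int (S j * q) * \<alpha> i)) (3 * c)"
    by (rule near_mono[OF sm b3])
  have I3: "near n (\<lambda>i. of_int (q^2) * \<alpha> i) (3 * c)"
    by (rule near_eq[OF sm3]) (rule eqI)
  have cd1: "c \<le> \<delta>" using cd c0 by linarith
  have cd3: "3 * c \<le> \<delta>" using cd c0 by linarith
  have F1: "near n (\<lambda>i. of_int q * \<alpha> i) \<delta>" by (rule near_mono[OF I1 cd1])
  have F2: "near n (\<lambda>i. of_int (q^2) * \<alpha> i) \<delta>" by (rule near_mono[OF I3 cd3])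
  have "q \<noteq> 0 \<and> near n (\<lambda>i. of_int q * \<alpha> i) \<delta> \<and> near n (\<lambda>i. of_int (q^2) * \<alpha> i) \<delta>"
    using q0 F1 F2 by (intro conjI)
  then show ?thesis
    by (rule exI[where P="\<lambda>q. q \<noteq> 0 \<and> near n (\<lambda>i. of_int q * \<alpha> i) \<delta> \<and> near n (\<lambda>i. of_int (q^2) * \<alpha> i) \<delta>"])
qed


lemma aux5:
  fixes A B x :: real
  assumes "0 < A"
  shows "x * (A * B) / A = x * B"
  using assms by simp

lemma grid_aux1:
  fixes t' c M n i :: nat
  assumes Mpos: "(0::real) < of_nat M" and "i < n"
  shows "of_nat (t' + c * M^n) / (of_nat M)^(i+1) = (of_nat t' / (of_nat M)^(i+1)::real) + of_int (int c * int M^(n - Suc i))"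
proof -
  have P: "(0::real) < (of_nat M)^(i+1)" using Mpos by simp
  have "n = (i+1) + (n - Suc i)" using assms(2) by simp
  then have pw: "(of_nat M::real)^n = of_nat M^(i+1) * of_nat M^(n - Suc i)"
    by (metis power_add)
  have 1: "(of_nat (t' + c * M^n) / (of_nat M)^(i+1)::real) = of_nat t' / (of_nat M)^(i+1) + of_nat c * (of_nat M)^n / (of_nat M)^(i+1)"
    by (simp add: add_divide_distrib)
  have 2: "(of_nat c * (of_nat M)^n / (of_nat M)^(i+1)::real) = of_nat c * (of_nat M)^(n - Suc i)"
    unfolding pw using P by (rule aux5)
  have 3: "(of_int (int c * int M^(n - Suc i))::real) = of_nat c * (of_nat M)^(n - Suc i)" by simp
  show ?thesis unfolding 1 2 3 ..
qed

lemma grid_aux2: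
  fixes R x :: real and c :: nat
  assumes "0 < R"
  shows "(x + of_nat c * R^n) / R^(n+1) = x / R^(n+1) + of_nat c / R"
proof -
  have P: "0 < R^n" using assms by simp
  have "(x + of_nat c * R^n) / R^(n+1) = x / R^(n+1) + of_nat c * R^n / (R * R^n)"
    by (simp add: add_divide_distrib)
  also have "of_nat c * R^n / (R * R^n) = of_nat c / R" using P by simp
  finally show ?thesis .
qed

lemma grid_aux3:
  fixes R x :: real
  assumes "0 < R" "x < R^n"
  shows "x / R^(n+1) < 1 / R"
proof -
  have P: "0 < R^n" using assms by simp
  have eq: "x / R^(n+1) = (x / R^n) / R" by simp
  have "x / R^n < 1" using assms P by simp
  then have "(x / R^n) / R < 1 / R" by (rule divide_strict_right_mono[OF _ assms(1)])
  then show ?thesis unfolding eq .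
qed

lemma grid:
  fixes M :: nat and \<tau> :: "nat \<Rightarrow> real"
  assumes M1: "M \<ge> 1"
  shows "\<exists>t::nat. t < M^n \<and> near n (\<lambda>i. of_nat t / (of_nat M)^(i+1) - \<tau> i) (1 / of_nat M)"
proof (induction n)
  case 0
  have "(0::nat) < M^0 \<and> near 0 (\<lambda>i. of_nat 0 / (of_nat M)^(i+1) - \<tau> i) (1 / of_nat M)"
    by (simp add: near_def)
  then show ?case by (rule exI[where x=0])
next
  case (Suc n)
  then obtain t' m where t': "t' < M^n"
    and h: "\<forall>i<n. \<bar>of_nat t' / (of_nat M)^(i+1) - \<tau> i - of_int (m i)\<bar> \<le> 1 / of_nat M"
    unfolding near_def by blast
  have Mpos: "(0::real) < of_nat M" using M1 by simp
  define c where "c = nat \<lfloor>of_nat M * frac (\<tau> n)\<rfloor>"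
  have fr: "0 \<le> frac (\<tau> n)" "frac (\<tau> n) < 1" by (simp_all add: frac_ge_0 frac_lt_1)
  have fl0: "0 \<le> \<lfloor>of_nat M * frac (\<tau> n)\<rfloor>" using fr Mpos by simp
  have cr: "(of_nat c::real) = of_int \<lfloor>of_nat M * frac (\<tau> n)\<rfloor>" unfolding c_def using fl0 by simp
  have c1: "of_nat c \<le> of_nat M * frac (\<tau> n)" using cr by linarith
  have c2: "of_nat M * frac (\<tau> n) < of_nat c + 1" using cr by linarith
  have "(of_nat c::real) < of_nat M"
  proof -
    have "of_nat M * frac (\<tau> n) < of_nat M * 1" using fr Mpos by (intro mult_strict_left_mono) auto
    then show ?thesis using c1 by linarith
  qed
  then have cM: "c < M" by simp
  define t where "t = t' + c * M^n"
  have tlt: "t < M^Suc n"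
  proof -
    have "t < M^n + c * M^n" unfolding t_def using t' by simp
    also have "\<dots> = (c + 1) * M^n" by simp
    also have "\<dots> \<le> M * M^n" using cM by (intro mult_right_mono) auto
    finally show ?thesis by simp
  qed
  define m' where "m' i = (if i < n then m i + int c * int M^(n - Suc i) else - \<lfloor>\<tau> n\<rfloor>)" for i
  have tr: "(of_nat t::real) = of_nat t' + of_nat c * (of_nat M)^n" unfolding t_def by simp
  have "\<forall>i<Suc n. \<bar>of_nat t / (of_nat M)^(i+1) - \<tau> i - of_int (m' i)\<bar> \<le> 1 / of_nat M"
  proof (intro allI impI)
    fix i assume "i < Suc n"
    show "\<bar>of_nat t / (of_nat M)^(i+1) - \<tau> i - of_int (m' i)\<bar> \<le> 1 / of_nat M"
    proof (cases "i < n")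
      case True
      have e: "(of_nat t::real) / (of_nat M)^(i+1) = of_nat t' / (of_nat M)^(i+1) + of_int (int c * int M^(n - Suc i))"
        unfolding t_def by (rule grid_aux1[OF Mpos True])
      have mi: "m' i = m i + int c * int M^(n - Suc i)" using True by (simp add: m'_def)
      have EQ: "of_nat t / (of_nat M)^(i+1) - \<tau> i - of_int (m' i)
            = (of_nat t' / (of_nat M)^(i+1) - \<tau> i - of_int (m i) :: real)"
        by (simp only: e mi of_int_add)
      have "\<bar>of_nat t' / (of_nat M)^(i+1) - \<tau> i - of_int (m i)\<bar> \<le> 1 / of_nat M"
        using h True by blast
      then show ?thesis unfolding EQ .
    next
      case False
      then have iN: "i = n" using \<open>i < Suc n\<close> by simp
      have e: "(of_nat t::real) / (of_nat M)^(n+1) = of_nat t' / (of_nat M)^(n+1) + of_nat c / of_nat M"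
        by (simp only: tr grid_aux2[OF Mpos])
      have b1: "(0::real) \<le> of_nat t' / (of_nat M)^(n+1)" by simp
      have "(of_nat t'::real) < (of_nat M)^n" using t' by (metis of_nat_less_iff of_nat_power)
      then have b2: "(of_nat t'::real) / (of_nat M)^(n+1) < 1 / of_nat M"
        by (rule grid_aux3[OF Mpos])
      have b3: "(of_nat c::real) / of_nat M \<le> frac (\<tau> n)" using c1 Mpos by (simp add: field_simps)
      have b4: "frac (\<tau> n) < (of_nat c::real) / of_nat M + 1 / of_nat M" using c2 Mpos by (simp add: field_simps)
      have mi: "m' n = - \<lfloor>\<tau> n\<rfloor>" by (simp add: m'_def)
      have EQ: "of_nat t / (of_nat M)^(i+1) - \<tau> i - of_int (m' i)
            = (of_nat t' / (of_nat M)^(n+1) + of_nat c / of_nat M - frac (\<tau> n) :: real)"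
        unfolding iN by (simp only: e mi of_int_minus frac_def)
      show ?thesis unfolding EQ abs_le_iff using b1 b2 b3 b4 by linarith
    qed
  qed
  then have "near (Suc n) (\<lambda>i. of_nat t / (of_nat M)^(i+1) - \<tau> i) (1 / of_nat M)"
    unfolding near_def by (rule exI[where x=m'])
  with tlt have "t < M^Suc n \<and> near (Suc n) (\<lambda>i. of_nat t / (of_nat M)^(i+1) - \<tau> i) (1 / of_nat M)"
    by (rule conjI)
  then show ?case by (rule exI[where x=t])
qed




lemma aux6:
  fixes g b :: real and q :: int
  assumes "0 \<le> g" "g \<le> b" "q \<noteq> 0"
  shows "\<bar>g / (2 * of_int q)\<bar> \<le> b"
proof -
  have "1 \<le> \<bar>(of_int q::real)\<bar>" using assms(3) by linarith
  then have h: "1 \<le> \<bar>2 * (of_int q::real)\<bar>" by simp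
  have "\<bar>g / (2 * of_int q)\<bar> = g / \<bar>2 * of_int q\<bar>" using assms(1) by (simp add: abs_div_pos)
  also have "\<dots> \<le> g / 1" using h assms(1) by (intro divide_left_mono) auto
  finally show ?thesis using assms(2) by simp
qed

lemma aux7:
  fixes s u q :: int and a g :: real
  shows "of_int (s + u * q) * a = ((of_int s * a - g) + g) + of_int u * (of_int q * a)"
  by (simp add: algebra_simps)

lemma aux8:
  fixes s u q :: int and a th g :: real
  assumes "q \<noteq> 0"
  shows "of_int ((s + u * q)^2) * a - th =
         ((of_int u * g - (th - of_int (s^2) * a)) + of_int (2 * q * u) * (of_int s * a - g / (2 * of_int q)))
          + of_int (u^2) * (of_int (q^2) * a)"
proof -
  have e: "of_int (2 * q * u) * (g / (2 * of_int q)) = (of_int u * g::real)"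
    using assms by (simp add: field_simps)
  have "of_int ((s + u * q)^2) * a - th =
         (of_int u * g - (th - of_int (s^2) * a)) + (of_int (2 * q * u) * (of_int s * a) - of_int u * g)
          + of_int (u^2) * (of_int (q^2) * a)"
    by (simp add: power2_eq_square algebra_simps)
  also have "\<dots> = (of_int u * g - (th - of_int (s^2) * a)) + (of_int (2 * q * u) * (of_int s * a) - of_int (2 * q * u) * (g / (2 * of_int q)))
          + of_int (u^2) * (of_int (q^2) * a)"
    by (simp only: e)
  also have "\<dots> = ((of_int u * g - (th - of_int (s^2) * a)) + of_int (2 * q * u) * (of_int s * a - g / (2 * of_int q)))
          + of_int (u^2) * (of_int (q^2) * a)"
    by (simp only: right_diff_distrib add.assoc)
  finally show ?thesis .
qed

lemma bnd1:
  fixes e T t Q m :: real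
  assumes "0 < e" "1 \<le> T" "0 \<le> t" "t \<le> T" "1 \<le> Q" "m \<le> e/4"
  shows "(e / (8 * Q * T) + m) + t * (e / (4 * T^2)) \<le> e"
proof -
  have "e / (8 * Q * T) \<le> e / (8 * 1 * 1)"
    using assms by (intro divide_left_mono mult_mono) auto
  moreover have "t * (e / (4 * T^2)) \<le> T * (e / (4 * T^2))"
    using assms by (intro mult_right_mono) auto
  moreover have "T * (e / (4 * T^2)) = e / (4 * T)" using assms by (simp add: power2_eq_square)
  moreover have "e / (4 * T) \<le> e / (4 * 1)" using assms by (intro divide_left_mono) auto
  ultimately show ?thesis using assms by linarith
qed

lemma bnd2:
  fixes e T t Q m :: real
  assumes "0 < e" "1 \<le> T" "0 \<le> t" "t \<le> T" "1 \<le> Q" "m \<le> e/4"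
  shows "(m + (2 * Q * t) * (e / (8 * Q * T))) + t^2 * (e / (4 * T^2)) \<le> e"
proof -
  have "(2 * Q * t) * (e / (8 * Q * T)) \<le> (2 * Q * T) * (e / (8 * Q * T))"
    using assms by (intro mult_right_mono) auto
  moreover have "(2 * Q * T) * (e / (8 * Q * T)) = e / 4" using assms by simp
  moreover have "t^2 * (e / (4 * T^2)) \<le> T^2 * (e / (4 * T^2))"
    using assms by (intro mult_right_mono power_mono) auto
  moreover have "T^2 * (e / (4 * T^2)) = e / 4" using assms by simp
  ultimately show ?thesis using assms by linarith
qed

lemma quad:
  assumes n1: "n \<ge> 1" and dn: "dense_orbit n \<alpha>" and ep: "\<epsilon> > 0"
  shows "\<exists>k::int. near n (\<lambda>i. of_int k * \<alpha> i) \<epsilon> \<and> near n (\<lambda>i. of_int (k^2) * \<alpha> i - \<theta> i) \<epsilon>"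
proof -
  define M :: nat where "M = nat \<lceil>4/\<epsilon>\<rceil> + 1"
  have M1: "M \<ge> 1" by (simp add: M_def)
  have Mpos: "(0::real) < of_nat M" using M1 by simp
  have M4: "1 / of_nat M \<le> \<epsilon>/4"
  proof -
    have c1: "4/\<epsilon> \<le> of_int \<lceil>4/\<epsilon>\<rceil>" by (rule le_of_int_ceiling)
    have "0 < 4/\<epsilon>" using ep by simp
    then have c0: "0 \<le> \<lceil>4/\<epsilon>\<rceil>" using c1 by linarith
    have "(of_nat M::real) = of_int \<lceil>4/\<epsilon>\<rceil> + 1" unfolding M_def using c0 by simp
    then have "4/\<epsilon> \<le> of_nat M" using c1 by linarith
    then have "4 \<le> \<epsilon> * of_nat M" using ep by (simp add: divide_le_eq mult.commute)
    then show ?thesis using ep Mpos by (simp add: divide_le_eq mult.commute)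
  qed
  define T :: real where "T = of_nat M ^ n"
  have T1: "1 \<le> T" unfolding T_def using M1 by simp
  define \<gamma> :: "nat \<Rightarrow> real" where "\<gamma> i = 1 / of_nat M ^ (i+1)" for i
  have \<gamma>0: "0 \<le> \<gamma> i" for i unfolding \<gamma>_def by simp
  have \<gamma>1: "\<gamma> i \<le> 1 / of_nat M" for i
  proof -
    have "1 \<le> (of_nat M::real)^i" using M1 by simp
    then have "of_nat M * 1 \<le> (of_nat M::real) * of_nat M^i" using Mpos by (intro mult_left_mono) auto
    then show ?thesis unfolding \<gamma>_def using Mpos by (intro divide_left_mono) auto
  qed
  define \<delta> where "\<delta> = \<epsilon> / (4 * T^2)"
  have \<delta>p: "\<delta> > 0" unfolding \<delta>_def using ep T1 by simp
  from recur[OF n1 dn \<delta>p] obtain q where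
    qall: "q \<noteq> 0 \<and> near n (\<lambda>i. of_int q * \<alpha> i) \<delta> \<and> near n (\<lambda>i. of_int (q^2) * \<alpha> i) \<delta>" ..
  have q0: "q \<noteq> 0" using qall by (rule conjunct1)
  have Q1: "near n (\<lambda>i. of_int q * \<alpha> i) \<delta>" by (rule qall[THEN conjunct2, THEN conjunct1])
  have Q2: "near n (\<lambda>i. of_int (q^2) * \<alpha> i) \<delta>" by (rule qall[THEN conjunct2, THEN conjunct2])
  have Q: "1 \<le> \<bar>of_int q::real\<bar>" using q0 by linarith
  define \<delta>3 where "\<delta>3 = \<epsilon> / (8 * \<bar>of_int q\<bar> * T)"
  have \<delta>3p: "\<delta>3 > 0" unfolding \<delta>3_def using ep T1 q0 by simp
  from dense_near[OF dn \<delta>3p, of "\<lambda>i. \<gamma> i / (2 * of_int q)"] obtain s where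
    S1: "near n (\<lambda>i. of_int s * \<alpha> i - \<gamma> i / (2 * of_int q)) \<delta>3" ..
  define \<tau> where "\<tau> i = \<theta> i - of_int (s^2) * \<alpha> i" for i
  from grid[OF M1, of n \<tau>] obtain t where
    tall: "t < M^n \<and> near n (\<lambda>i. of_nat t / (of_nat M)^(i+1) - \<tau> i) (1 / of_nat M)" ..
  have tT: "t < M^n" using tall by (rule conjunct1)
  have G: "near n (\<lambda>i. of_nat t / (of_nat M)^(i+1) - \<tau> i) (1 / of_nat M)" using tall by (rule conjunct2)
  have tT': "of_nat t \<le> T" unfolding T_def using tT
    by (metis less_imp_le of_nat_le_iff of_nat_power)
  define k where "k = s + int t * q"
  have A1: "near n (\<lambda>i. \<gamma> i / (2 * of_int q)) (1 / of_nat M)"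
    by (rule near_small) (rule aux6[OF \<gamma>0 \<gamma>1 q0])
  have A2: "near n (\<lambda>i. of_int (int t) * (of_int q * \<alpha> i)) (\<bar>of_int (int t)\<bar> * \<delta>)"
    by (rule near_scale[OF Q1])
  have A: "near n (\<lambda>i. ((of_int s * \<alpha> i - \<gamma> i / (2 * of_int q)) + \<gamma> i / (2 * of_int q))
               + of_int (int t) * (of_int q * \<alpha> i)) ((\<delta>3 + 1 / of_nat M) + \<bar>of_int (int t)\<bar> * \<delta>)"
    by (rule near_add[OF near_add[OF S1 A1] A2])
  have Ab: "(\<delta>3 + 1 / of_nat M) + \<bar>of_int (int t)\<bar> * \<delta> \<le> \<epsilon>"
    unfolding \<delta>3_def \<delta>_def using bnd1[OF ep T1 _ tT' Q M4] by simp
  have K1: "near n (\<lambda>i. of_int k * \<alpha> i) \<epsilon>"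
    by (rule near_eq[OF near_mono[OF A Ab]]) (simp only: k_def aux7)
  have B2: "near n (\<lambda>i. of_int (2 * q * int t) * (of_int s * \<alpha> i - \<gamma> i / (2 * of_int q)))
               (\<bar>of_int (2 * q * int t)\<bar> * \<delta>3)"
    by (rule near_scale[OF S1])
  have B3: "near n (\<lambda>i. of_int (int t ^ 2) * (of_int (q^2) * \<alpha> i)) (\<bar>of_int (int t ^ 2)\<bar> * \<delta>)"
    by (rule near_scale[OF Q2])
  have B: "near n (\<lambda>i. ((of_nat t / (of_nat M)^(i+1) - \<tau> i)
               + of_int (2 * q * int t) * (of_int s * \<alpha> i - \<gamma> i / (2 * of_int q)))
               + of_int (int t ^ 2) * (of_int (q^2) * \<alpha> i))
            ((1 / of_nat M + \<bar>of_int (2 * q * int t)\<bar> * \<delta>3) + \<bar>of_int (int t ^ 2)\<bar> * \<delta>)"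
    by (rule near_add[OF near_add[OF G B2] B3])
  have Bb: "(1 / of_nat M + \<bar>of_int (2 * q * int t)\<bar> * \<delta>3) + \<bar>of_int (int t ^ 2)\<bar> * \<delta> \<le> \<epsilon>"
  proof -
    have "\<bar>of_int (2 * q * int t)\<bar> = 2 * \<bar>of_int q\<bar> * (of_nat t::real)" by (simp add: abs_mult)
    moreover have "\<bar>of_int (int t ^ 2)\<bar> = (of_nat t::real)^2" by simp
    ultimately show ?thesis
      unfolding \<delta>3_def \<delta>_def using bnd2[OF ep T1 _ tT' Q M4] by simp
  qed
  have K2: "near n (\<lambda>i. of_int (k^2) * \<alpha> i - \<theta> i) \<epsilon>"
  proof (rule near_eq[OF near_mono[OF B Bb]])
    fix i
    have g: "of_nat t / (of_nat M)^(i+1) = of_int (int t) * \<gamma> i" unfolding \<gamma>_def by simp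
    show "of_int (k^2) * \<alpha> i - \<theta> i =
        ((of_nat t / (of_nat M)^(i+1) - \<tau> i)
               + of_int (2 * q * int t) * (of_int s * \<alpha> i - \<gamma> i / (2 * of_int q)))
               + of_int (int t ^ 2) * (of_int (q^2) * \<alpha> i)"
      unfolding g \<tau>_def k_def by (rule aux8[OF q0])
  qed
  from K1 K2 have "near n (\<lambda>i. of_int k * \<alpha> i) \<epsilon> \<and> near n (\<lambda>i. of_int (k^2) * \<alpha> i - \<theta> i) \<epsilon>"
    by (rule conjI)
  then show ?thesis by (rule exI[where x=k])
qed


lemma inB:
  assumes tor: "torus_open n V" and ball: "\<forall>y. (\<forall>i<n. \<bar>y i - 0\<bar> < e) \<longrightarrow> y \<in> V"
    and nr: "near n (\<lambda>i. of_int k * \<alpha> i) r" and re: "r < e"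
  shows "(\<lambda>i. of_int k * \<alpha> i) \<in> V"
proof -
  obtain m where m: "\<forall>i<n. \<bar>of_int k * \<alpha> i - of_int (m i)\<bar> \<le> r" using nr unfolding near_def by blast
  define y where "y i = of_int k * \<alpha> i - of_int (m i)" for i
  have "\<forall>i<n. \<bar>y i - 0\<bar> < e" using m re unfolding y_def by force
  then have yV: "y \<in> V" using ball by blast
  have mi: "\<forall>i. (\<lambda>i. of_int (m i)::real) i \<in> \<int>" by simp
  have T2: "\<forall>x m. (\<forall>i. m i \<in> \<int>) \<longrightarrow> (x \<in> V \<longleftrightarrow> (\<lambda>i. x i + m i) \<in> V)"
    using tor unfolding torus_open_def by (rule conjunct2)
  have "y \<in> V \<longleftrightarrow> (\<lambda>i. y i + of_int (m i)) \<in> V"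
    by (rule T2[rule_format, of "\<lambda>i. of_int (m i)" y]) simp
  moreover have "(\<lambda>i. y i + of_int (m i)) = (\<lambda>i. of_int k * \<alpha> i)" unfolding y_def by simp
  ultimately show ?thesis using yV by simp
qed

theorem corollary1p2:
  fixes B :: "int set"
  assumes "bohr_zero_nonperiodic B"
  shows "{x * y - z ^ 2 | x y z. x \<in> B \<and> y \<in> B \<and> z \<in> B} = (UNIV :: int set)"
proof -
  from assms obtain n \<alpha> V where n1: "n \<ge> 1" and dn: "dense_orbit n \<alpha>" and tor: "torus_open n V"
    and zV: "(\<lambda>i. 0) \<in> V" and Bdef: "B = {k. (\<lambda>i. of_int k * \<alpha> i) \<in> V}"
    unfolding bohr_zero_nonperiodic_def by blast
  have T1: "\<forall>x\<in>V. \<exists>e>0. \<forall>y. (\<forall>i<n. \<bar>y i - x i\<bar> < e) \<longrightarrow> y \<in> V"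
    using tor unfolding torus_open_def by (rule conjunct1)
  from bspec[OF T1 zV] obtain e where
    eall: "e > 0 \<and> (\<forall>y. (\<forall>i<n. \<bar>y i - 0\<bar> < e) \<longrightarrow> y \<in> V)" by (elim exE) (rule that)
  have e0: "e > 0" using eall by (rule conjunct1)
  have ball: "\<forall>y. (\<forall>i<n. \<bar>y i - 0\<bar> < e) \<longrightarrow> y \<in> V" using eall by (rule conjunct2)
  define \<rho> where "\<rho> = e / 2"
  have \<rho>0: "\<rho> > 0" and \<rho>e: "\<rho> < e" using e0 by (simp_all add: \<rho>_def)
  have memB: "k \<in> B" if "near n (\<lambda>i. of_int k * \<alpha> i) \<rho>" for k
    using inB[OF tor ball that \<rho>e] Bdef by simp
  show ?thesis
  proof (intro set_eqI iffI)
    fix N :: int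
    show "N \<in> {x * y - z ^ 2 | x y z. x \<in> B \<and> y \<in> B \<and> z \<in> B}"
    proof -
      have h2: "\<rho>/2 > 0" using \<rho>0 by simp
      from quad[OF n1 dn h2, of "\<lambda>i. - of_int N * \<alpha> i"] obtain a where
        aall: "near n (\<lambda>i. of_int a * \<alpha> i) (\<rho>/2) \<and> near n (\<lambda>i. of_int (a^2) * \<alpha> i - - of_int N * \<alpha> i) (\<rho>/2)" ..
      have A1: "near n (\<lambda>i. of_int a * \<alpha> i) (\<rho>/2)" using aall by (rule conjunct1)
      have A2: "near n (\<lambda>i. of_int (a^2) * \<alpha> i - - of_int N * \<alpha> i) (\<rho>/2)" using aall by (rule conjunct2)
      have aB: "a \<in> B" by (rule memB) (rule near_mono[OF A1], use \<rho>0 in simp)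
      define x where "x = a^2 + N"
      have xnear: "near n (\<lambda>i. of_int x * \<alpha> i) (\<rho>/2)"
        by (rule near_eq[OF A2]) (simp add: x_def algebra_simps)
      have xB: "x \<in> B" by (rule memB) (rule near_mono[OF xnear], use \<rho>0 in simp)
      show ?thesis
      proof (cases "x = 0")
        case True
        have zB: "0 \<in> B" using zV Bdef by simp
        have "N = 0 * 0 - a^2" using True by (simp add: x_def)
        then show ?thesis using zB aB by blast
      next
        case False
        define \<epsilon>2 where "\<epsilon>2 = \<rho> / (2 * (\<bar>of_int x\<bar> + 2 * \<bar>of_int a\<bar> + 1))"
        have den: "(0::real) < 2 * (\<bar>of_int x\<bar> + 2 * \<bar>of_int a\<bar> + 1)" by simp
        have e2: "\<epsilon>2 > 0" unfolding \<epsilon>2_def using \<rho>0 den by simp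
        from quad[OF n1 dn e2, of "\<lambda>i. - \<alpha> i / of_int x"] obtain d where
          dall: "near n (\<lambda>i. of_int d * \<alpha> i) \<epsilon>2 \<and> near n (\<lambda>i. of_int (d^2) * \<alpha> i - - \<alpha> i / of_int x) \<epsilon>2" ..
        have D1: "near n (\<lambda>i. of_int d * \<alpha> i) \<epsilon>2" using dall by (rule conjunct1)
        have D2: "near n (\<lambda>i. of_int (d^2) * \<alpha> i - - \<alpha> i / of_int x) \<epsilon>2" using dall by (rule conjunct2)
        have bnd: "\<bar>of_int x\<bar> * \<epsilon>2 + \<bar>of_int (-2 * a)\<bar> * \<epsilon>2 \<le> \<rho>/2"
        proof -
          have "\<bar>of_int x\<bar> * \<epsilon>2 + \<bar>of_int (-2 * a)\<bar> * \<epsilon>2 = (\<bar>of_int x\<bar> + 2 * \<bar>of_int a\<bar>) * \<epsilon>2"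
            by (simp add: abs_mult algebra_simps)
          also have "\<dots> \<le> (\<bar>of_int x\<bar> + 2 * \<bar>of_int a\<bar> + 1) * \<epsilon>2" using e2 by (intro mult_right_mono) auto
          also have "\<dots> = \<rho> / 2" unfolding \<epsilon>2_def using den by (simp add: field_simps)
          finally show ?thesis .
        qed
        define z where "z = d * x - a"
        define y where "y = d^2 * x - 2 * a * d + 1"
        have Z: "near n (\<lambda>i. of_int x * (of_int d * \<alpha> i) + of_int (-1) * (of_int a * \<alpha> i))
                   (\<bar>of_int x\<bar> * \<epsilon>2 + \<bar>of_int (-1)\<bar> * (\<rho>/2))"
          by (rule near_add[OF near_scale[OF D1] near_scale[OF A1]])
        have zb: "\<bar>of_int x\<bar> * \<epsilon>2 + \<bar>of_int (-1)\<bar> * (\<rho>/2) \<le> \<rho>"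
        proof -
          have "0 \<le> \<bar>of_int (-2 * a)::real\<bar> * \<epsilon>2"
            by (rule mult_nonneg_nonneg[OF abs_ge_zero less_imp_le[OF e2]])
          moreover have "\<bar>of_int (-1)::real\<bar> = 1" by simp
          ultimately show ?thesis using bnd by linarith
        qed
        have zB: "z \<in> B"
          by (rule memB, rule near_eq[OF near_mono[OF Z zb]]) (simp add: z_def algebra_simps)
        have Y: "near n (\<lambda>i. of_int x * (of_int (d^2) * \<alpha> i - - \<alpha> i / of_int x) + of_int (-2 * a) * (of_int d * \<alpha> i))
                   (\<bar>of_int x\<bar> * \<epsilon>2 + \<bar>of_int (-2 * a)\<bar> * \<epsilon>2)"
          by (rule near_add[OF near_scale[OF D2] near_scale[OF D1]])
        have yb: "\<bar>of_int x\<bar> * \<epsilon>2 + \<bar>of_int (-2 * a)\<bar> * \<epsilon>2 \<le> \<rho>" using bnd \<rho>0 by simp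
        have yeq: "of_int y * \<alpha> i = of_int x * (of_int (d^2) * \<alpha> i - - \<alpha> i / of_int x) + of_int (-2 * a) * (of_int d * \<alpha> i)" for i
        proof -
          have xa: "(of_int x::real) * (\<alpha> i / of_int x) = \<alpha> i" using False by simp
          have "of_int x * (of_int (d^2) * \<alpha> i - - \<alpha> i / of_int x) + of_int (-2 * a) * (of_int d * \<alpha> i)
               = of_int x * (of_int (d^2) * \<alpha> i) + of_int x * (\<alpha> i / of_int x) + of_int (-2 * a) * (of_int d * \<alpha> i)"
            by (simp add: algebra_simps)
          also have "\<dots> = of_int x * (of_int (d^2) * \<alpha> i) + \<alpha> i + of_int (-2 * a) * (of_int d * \<alpha> i)"
            by (simp only: xa)
          also have "\<dots> = of_int y * \<alpha> i" by (simp add: y_def algebra_simps)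
          finally show ?thesis by simp
        qed
        have yB: "y \<in> B"
          by (rule memB, rule near_eq[OF near_mono[OF Y yb]]) (rule yeq)
        have "N = x * y - z^2" by (simp add: x_def y_def z_def power2_eq_square algebra_simps)
        then show ?thesis using xB yB zB by blast
      qed
    qed
  qed simp
qed

end
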